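(* Let $\mathcal C\subset\mathbb{R}^P$ be a compact convex set containing the origin as an interior point, and let $G=\gamma_{\mathcal C}$ be its gauge. Then there exists a constant $L_2>0$, independent of $y$, such that for any $\theta>0$, $\theta'>0$ and any $y\in\mathbb{R}^P$, $$\|\mathrm{Prox}_{\theta G}(y)-\mathrm{Prox}_{\theta' G}(y)\|\le L_2|\theta-\theta'|;$$ i.e. for any $y$, $\theta\mapsto\mathrm{Prox}_{\theta G}(y)$ is Lipschitz continuous on $]0,+\infty[$.
   Context: The gauge of a non-empty closed convex set $\mathcal C$ containing the origin is $\gamma_{\mathcal C}(y)=\inf\{\omega>0: y\in\omega\mathcal C\}$ (with $+\infty$ if the set is empty). $\mathrm{Prox}_{G}(y)=\operatorname{argmin}_z\frac12\|z-y\|^2+G(z)$. *)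

theory Defs
  imports "HOL-Analysis.Analysis"
begin

definition gauge_fn :: "'a::real_vector set \<Rightarrow> 'a \<Rightarrow> ereal" where
  "gauge_fn C y = (INF \<omega>\<in>{\<omega>::real. \<omega> > 0 \<and> y \<in> (\<lambda>c. \<omega> *\<^sub>R c) ` C}. ereal \<omega>)"

definition prox :: "('a::real_normed_vector \<Rightarrow> ereal) \<Rightarrow> 'a \<Rightarrow> 'a" where
  "prox G y = (THE z. \<forall>w. ereal ((1/2) * (norm (z - y))\<^sup>2) + G z
                         \<le> ereal ((1/2) * (norm (w - y))\<^sup>2) + G w)"

end

theory Submission imports Defs begin

definition gS :: "'a::real_vector set \<Rightarrow> 'a \<Rightarrow> real set" where
  "gS C z = {\<omega>::real. \<omega> > 0 \<and> z \<in> (\<lambda>c. \<omega> *\<^sub>R c) ` C}"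

definition gr :: "'a::real_vector set \<Rightarrow> 'a \<Rightarrow> real" where
  "gr C z = Inf (gS C z)"

locale gsetup =
  fixes C :: "'a::real_normed_vector set" and r :: real
  assumes cvx: "convex C" and r: "r > 0" and cb: "cball 0 r \<subseteq> C"
begin

lemma in_S: assumes "\<omega> > 0" "norm z \<le> \<omega> * r" shows "\<omega> \<in> gS C z"
proof -
  have "z /\<^sub>R \<omega> \<in> cball 0 r" using assms
    by (simp add: divide_simps mult.commute)
  hence "z /\<^sub>R \<omega> \<in> C" using cb by blast
  moreover have "z = \<omega> *\<^sub>R (z /\<^sub>R \<omega>)" using assms by simp
  ultimately show ?thesis using assms unfolding gS_def by blast
qed

lemma S_ne: "gS C z \<noteq> {}"
proof -
  have "norm z / r + 1 \<in> gS C z"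
    by (rule in_S) (use r in \<open>auto simp: field_simps add_pos_nonneg\<close>)
  thus ?thesis by blast
qed

lemma S_bdd: "bdd_below (gS C z)"
  unfolding gS_def by (rule bdd_belowI[of _ 0]) auto

lemma gauge_eq: "gauge_fn C z = ereal (gr C z)"
proof -
  have "gauge_fn C z = Inf (ereal ` gS C z)" unfolding gauge_fn_def gS_def by simp
  also have "\<dots> = ereal (gr C z)" unfolding gr_def by (rule ereal_Inf'[OF S_bdd S_ne, symmetric])
  finally show ?thesis .
qed

lemma g_nonneg: "gr C z \<ge> 0"
  unfolding gr_def by (rule cInf_greatest[OF S_ne]) (auto simp: gS_def)

lemma g_le: "gr C z \<le> norm z / r"
proof (rule dense_ge)
  fix w assume w: "norm z / r < w"
  have "w > 0" using w r by (smt (verit) divide_nonneg_pos norm_ge_zero)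
  moreover have "norm z \<le> w * r" using w r by (simp add: field_simps)
  ultimately have "w \<in> gS C z" by (rule in_S)
  thus "gr C z \<le> w" unfolding gr_def by (rule cInf_lower[OF _ S_bdd])
qed

lemma S_add: assumes "a \<in> gS C u" "b \<in> gS C v" shows "a + b \<in> gS C (u + v)"
proof -
  obtain c1 c2 where c: "c1 \<in> C" "c2 \<in> C" "u = a *\<^sub>R c1" "v = b *\<^sub>R c2" "a > 0" "b > 0"
    using assms unfolding gS_def by blast
  have "(a/(a+b)) *\<^sub>R c1 + (b/(a+b)) *\<^sub>R c2 \<in> C"
    proof (rule convexD[OF cvx c(1) c(2)])
    show "0 \<le> a/(a+b)" "0 \<le> b/(a+b)" using c by auto
    show "a/(a+b) + b/(a+b) = 1" using c by (simp add: add_divide_distrib[symmetric])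
  qed
  moreover have "u + v = (a+b) *\<^sub>R ((a/(a+b)) *\<^sub>R c1 + (b/(a+b)) *\<^sub>R c2)"
    using c by (simp add: scaleR_add_right)
  ultimately show ?thesis using c unfolding gS_def by force
qed

lemma g_sub: "gr C (u + v) \<le> gr C u + gr C v"
proof -
  have "gr C (u+v) - gr C u \<le> b" if b: "b \<in> gS C v" for b
  proof -
    have "gr C (u+v) - b \<le> gr C u" unfolding gr_def
    proof (rule cInf_greatest[OF S_ne])
      fix a assume "a \<in> gS C u"
      hence "a + b \<in> gS C (u+v)" using S_add b by blast
      hence "Inf (gS C (u+v)) \<le> a + b" by (rule cInf_lower[OF _ S_bdd])
      thus "Inf (gS C (u+v)) - b \<le> a" by simp
    qed
    thus ?thesis unfolding gr_def by simp
  qed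
  hence "gr C (u+v) - gr C u \<le> gr C v" unfolding gr_def[of C v] by (intro cInf_greatest[OF S_ne])
  thus ?thesis by simp
qed

lemma g_hom: assumes "t \<ge> 0" shows "gr C (t *\<^sub>R u) \<le> t * gr C u"
proof (cases "t = 0")
  case True thus ?thesis using g_le[of 0] g_nonneg[of 0] by simp
next
  case False
  hence t: "t > 0" using assms by simp
  have "gr C (t *\<^sub>R u) / t \<le> gr C u" unfolding gr_def[of C u]
  proof (rule cInf_greatest[OF S_ne])
    fix a assume "a \<in> gS C u"
    then obtain c where "c \<in> C" "u = a *\<^sub>R c" "a > 0" unfolding gS_def by blast
    hence "t * a \<in> gS C (t *\<^sub>R u)" using t unfolding gS_def by force
    hence "gr C (t *\<^sub>R u) \<le> t * a" unfolding gr_def by (rule cInf_lower[OF _ S_bdd])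
    thus "gr C (t *\<^sub>R u) / t \<le> a" using t by (simp add: field_simps)
  qed
  thus ?thesis using t by (simp add: field_simps)
qed

lemma g_lip: "gr C x - gr C z \<le> norm (x - z) / r"
  using g_sub[of z "x - z"] g_le[of "x - z"] by simp

lemma g_lip_abs: "\<bar>gr C x - gr C z\<bar> \<le> norm (x - z) / r"
  using g_lip[of x z] g_lip[of z x] by (simp add: norm_minus_commute)

lemma g_convex: assumes "0 \<le> t" "t \<le> 1"
  shows "gr C ((1-t) *\<^sub>R u + t *\<^sub>R v) \<le> (1-t) * gr C u + t * gr C v"
  using g_sub[of "(1-t) *\<^sub>R u" "t *\<^sub>R v"] g_hom[of "1-t" u] g_hom[of t v] assms by simp

lemma g_cont: "continuous_on UNIV (gr C)"
  unfolding continuous_on_iff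
proof (intro ballI allI impI)
  fix x and e :: real assume e: "e > 0"
  show "\<exists>d>0. \<forall>x'\<in>UNIV. dist x' x < d \<longrightarrow> dist (gr C x') (gr C x) < e"
  proof (intro exI[of _ "e*r"] conjI ballI impI)
    show "e * r > 0" using e r by simp
    fix x' assume "dist x' x < e * r"
    hence "norm (x' - x) / r < e" using r by (simp add: dist_norm field_simps)
    thus "dist (gr C x') (gr C x) < e" using g_lip_abs[of x' x] by (simp add: dist_real_def)
  qed
qed

end

definition fobj :: "real \<Rightarrow> ('a::real_inner \<Rightarrow> real) \<Rightarrow> 'a \<Rightarrow> 'a \<Rightarrow> real" where
  "fobj \<theta> h y z = (1/2) * (norm (z - y))\<^sup>2 + \<theta> * h z"

lemma norm_expand: "(norm (a + t *\<^sub>R b))\<^sup>2 = (norm a)\<^sup>2 + 2 * t * (a \<bullet> b) + t\<^sup>2 * (norm b)\<^sup>2"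
  for a b :: "'a::real_inner"
  unfolding power2_norm_eq_inner
  by (simp add: inner_add_left inner_add_right inner_commute algebra_simps power2_eq_square)

lemma VI:
  fixes h :: "'a::real_inner \<Rightarrow> real"
  assumes conv: "\<And>u v t. 0 \<le> t \<Longrightarrow> t \<le> 1 \<Longrightarrow> h ((1-t) *\<^sub>R u + t *\<^sub>R v) \<le> (1-t) * h u + t * h v"
    and th: "\<theta> \<ge> 0" and mn: "\<forall>w. fobj \<theta> h y p \<le> fobj \<theta> h y w"
  shows "(p - y) \<bullet> (w - p) + \<theta> * (h w - h p) \<ge> 0"
proof (rule ccontr)
  define a where "a = (p - y) \<bullet> (w - p) + \<theta> * (h w - h p)"
  define n where "n = (norm (w - p))\<^sup>2"
  assume "\<not> ?thesis"
  hence a: "a < 0" unfolding a_def by simp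
  have n: "n \<ge> 0" unfolding n_def by simp
  have key: "0 \<le> a + t/2 * n" if t: "0 < t" "t \<le> 1" for t
  proof -
    have eq: "(1-t) *\<^sub>R p + t *\<^sub>R w = p + t *\<^sub>R (w - p)" by (simp add: algebra_simps)
    have "fobj \<theta> h y p \<le> fobj \<theta> h y (p + t *\<^sub>R (w - p))" using mn by blast
    also have "\<dots> = (1/2) * (norm ((p - y) + t *\<^sub>R (w - p)))\<^sup>2 + \<theta> * h ((1-t) *\<^sub>R p + t *\<^sub>R w)"
      unfolding fobj_def eq by (simp add: algebra_simps)
    also have "\<dots> \<le> (1/2) * (norm ((p - y) + t *\<^sub>R (w - p)))\<^sup>2 + \<theta> * ((1-t) * h p + t * h w)"
      using conv[of t p w] t th by (simp add: mult_left_mono)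
    also have "\<dots> = fobj \<theta> h y p + t * a + t\<^sup>2 / 2 * n"
      unfolding fobj_def norm_expand a_def n_def by (simp add: algebra_simps)
    finally have "0 \<le> t * (a + t/2 * n)" by (simp add: algebra_simps power2_eq_square)
    thus ?thesis using t by (simp add: zero_le_mult_iff)
  qed
  define t where "t = min 1 (- a / (n + 1))"
  have t0: "0 < t" "t \<le> 1" unfolding t_def using a n by (auto simp: divide_neg_pos add_nonneg_pos)
  have "t * n \<le> (- a / (n + 1)) * n" unfolding t_def using n by (intro mult_right_mono) auto
  also have "\<dots> < - a" using a n by (simp add: field_simps)
  finally have "t/2 * n < -a" using n t0 a by simp
  with key[OF t0] show False by simp
qed

lemma growth:
  fixes h :: "'a::real_inner \<Rightarrow> real"
  assumes "(p - y) \<bullet> (w - p) + \<theta> * (h w - h p) \<ge> 0"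
  shows "fobj \<theta> h y p + (1/2) * (norm (w - p))\<^sup>2 \<le> fobj \<theta> h y w"
proof -
  have "w - y = (p - y) + 1 *\<^sub>R (w - p)" by simp
  hence "(norm (w - y))\<^sup>2 = (norm (p - y))\<^sup>2 + 2 * ((p - y) \<bullet> (w - p)) + (norm (w - p))\<^sup>2"
    using norm_expand[of "p - y" 1 "w - p"] by simp
  thus ?thesis using assms unfolding fobj_def by (simp add: algebra_simps)
qed

lemma exist:
  fixes h :: "'a::euclidean_space \<Rightarrow> real"
  assumes cont: "continuous_on UNIV h" and nn: "\<And>z. h z \<ge> 0" and th: "\<theta> > 0"
  shows "\<exists>p. \<forall>w. fobj \<theta> h y p \<le> fobj \<theta> h y w"
proof -
  define R where "R = \<theta> * h y + 1"
  have R: "R \<ge> 0" unfolding R_def using nn th by simp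
  have c: "continuous_on (cball y R) (fobj \<theta> h y)" unfolding fobj_def
    by (intro continuous_intros continuous_on_subset[OF cont]) auto
  obtain p where p: "p \<in> cball y R" "\<forall>w\<in>cball y R. fobj \<theta> h y p \<le> fobj \<theta> h y w"
    using continuous_attains_inf[OF compact_cball _ c] R by auto
  have "fobj \<theta> h y p \<le> fobj \<theta> h y w" for w
  proof (cases "w \<in> cball y R")
    case True thus ?thesis using p by blast
  next
    case False
    hence "norm (w - y) > R" by (simp add: dist_norm norm_minus_commute)
    hence "R\<^sup>2 < (norm (w - y))\<^sup>2" using R by (simp add: power_strict_mono)
    moreover have "2 * (\<theta> * h y) < R\<^sup>2" unfolding R_def using nn[of y] th
      by (simp add: power2_eq_square algebra_simps) (smt (verit) mult_nonneg_nonneg)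
    moreover have "fobj \<theta> h y p \<le> fobj \<theta> h y y" using p R by auto
    moreover have "\<theta> * h w \<ge> 0" using nn th by simp
    ultimately show ?thesis unfolding fobj_def by simp
  qed
  thus ?thesis by blast
qed

theorem proposition5:
  fixes C :: "'a::euclidean_space set"
  assumes "compact C" and "convex C" and "0 \<in> interior C"
  shows "\<exists>L2>0. \<forall>\<theta>>0. \<forall>\<theta>'>0. \<forall>y::'a.
           norm (prox (\<lambda>z. ereal \<theta> * gauge_fn C z) y - prox (\<lambda>z. ereal \<theta>' * gauge_fn C z) y)
             \<le> L2 * \<bar>\<theta> - \<theta>'\<bar>"
proof -
  obtain e where e: "e > 0" "ball 0 e \<subseteq> C" using assms(3) mem_interior by blast
  define r where "r = e / 2"
  have "cball 0 r \<subseteq> ball 0 e" unfolding r_def using e by auto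
  hence cbr: "cball 0 r \<subseteq> C" using e by blast
  interpret gsetup C r using assms(2) cbr e by unfold_locales (auto simp: r_def)
  have pmin: "\<forall>w. fobj \<theta> (gr C) y (prox (\<lambda>z. ereal \<theta> * gauge_fn C z) y) \<le> fobj \<theta> (gr C) y w"
    if th: "\<theta> > 0" for \<theta> y
  proof -
    have eq: "prox (\<lambda>z. ereal \<theta> * gauge_fn C z) y = (THE p. \<forall>w. fobj \<theta> (gr C) y p \<le> fobj \<theta> (gr C) y w)"
      unfolding prox_def fobj_def gauge_eq by simp
    have ex1: "\<exists>!p. \<forall>w. fobj \<theta> (gr C) y p \<le> fobj \<theta> (gr C) y w"
    proof -
      obtain p where p: "\<forall>w. fobj \<theta> (gr C) y p \<le> fobj \<theta> (gr C) y w"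
        using exist[OF g_cont g_nonneg th] by blast
      moreover have "q = p" if q: "\<forall>w. fobj \<theta> (gr C) y q \<le> fobj \<theta> (gr C) y w" for q
      proof -
        have "fobj \<theta> (gr C) y p + (1/2) * (norm (q - p))\<^sup>2 \<le> fobj \<theta> (gr C) y q"
          by (rule growth, rule VI[OF g_convex _ p]) (use th in auto)
        moreover have "fobj \<theta> (gr C) y q \<le> fobj \<theta> (gr C) y p" using q by blast
        ultimately have "(norm (q - p))\<^sup>2 \<le> 0" by linarith
        thus ?thesis by simp
      qed
      ultimately show ?thesis by blast
    qed
    show ?thesis unfolding eq by (rule theI'[OF ex1])
  qed
  show ?thesis
  proof (intro exI[of _ "1/r"] conjI allI impI)
    show "1/r > 0" using r by simp
    fix \<theta> \<theta>' :: real and y :: 'a assume th: "\<theta> > 0" "\<theta>' > 0"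
    define p where "p = prox (\<lambda>z. ereal \<theta> * gauge_fn C z) y"
    define q where "q = prox (\<lambda>z. ereal \<theta>' * gauge_fn C z) y"
    have pmp: "\<forall>w. fobj \<theta> (gr C) y p \<le> fobj \<theta> (gr C) y w" using pmin[OF th(1)] unfolding p_def .
    have pmq: "\<forall>w. fobj \<theta>' (gr C) y q \<le> fobj \<theta>' (gr C) y w" using pmin[OF th(2)] unfolding q_def .
    have v1: "(p - y) \<bullet> (q - p) + \<theta> * (gr C q - gr C p) \<ge> 0"
      by (rule VI[OF g_convex _ pmp]) (use th in auto)
    have v2: "(q - y) \<bullet> (p - q) + \<theta>' * (gr C p - gr C q) \<ge> 0"
      by (rule VI[OF g_convex _ pmq]) (use th in auto)
    have "(p - y) \<bullet> (q - p) + (q - y) \<bullet> (p - q) = - ((p - q) \<bullet> (p - q))"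
      by (simp add: inner_diff_left inner_diff_right inner_commute algebra_simps)
    hence "(norm (p - q))\<^sup>2 \<le> (\<theta> - \<theta>') * (gr C q - gr C p)"
      using v1 v2 by (simp add: power2_norm_eq_inner algebra_simps)
    also have "\<dots> \<le> \<bar>\<theta> - \<theta>'\<bar> * \<bar>gr C q - gr C p\<bar>" by (simp add: abs_mult[symmetric])
    also have "\<dots> \<le> \<bar>\<theta> - \<theta>'\<bar> * (norm (p - q) / r)"
      using mult_left_mono[OF g_lip_abs[of q p], of "\<bar>\<theta> - \<theta>'\<bar>"] by (simp add: norm_minus_commute)
    finally have *: "norm (p - q) * norm (p - q) \<le> norm (p - q) * (1/r * \<bar>\<theta> - \<theta>'\<bar>)"
      by (simp add: power2_eq_square algebra_simps)
    show "norm (p - q) \<le> 1/r * \<bar>\<theta> - \<theta>'\<bar>"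
    proof (cases "norm (p - q) = 0")
      case True thus ?thesis using r by simp
    next
      case False
      hence "norm (p - q) > 0" by simp
      thus ?thesis using * mult_le_cancel_left_pos[of "norm (p - q)" "norm (p - q)" "1/r * \<bar>\<theta> - \<theta>'\<bar>"] by linarith
    qed
  qed
qed

end
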